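(* Let $R$ be an associative ring with identity $1$ and an involution $*$, let $p,q\in R$ be projections, and put $\overline{p}=1-p$, $\overline{q}=1-q$. If $p\overline{q}$ and $\overline{p}q$ are both MP invertible, then $p-q$ is MP invertible and $$(p-q)^{\dagger}=\overline{q}(p\overline{q}p)^{\dagger}-q(\overline{p}q\overline{p})^{\dagger}.$$
   Context: An involution on $R$ is a map $a\mapsto a^*$ with $(a^* )^*=a$, $(a+b)^*=a^*+b^*$, $(ab)^*=b^*a^*$. An element $a$ is MP invertible if there is $b$ with $aba=a$, $bab=b$, $(ab)^*=ab$, $(ba)^*=ba$; this $b$ is unique and written $a^{\dagger}$. A projection is an element $p$ with $p^2=p=p^*$. (Under the hypothesis, $p\overline{q}p$ and $\overline{p}q\overline{p}$ are MP invertible, so the formula makes sense.) *)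

theory Defs
  imports Main
begin

definition involution :: "('a::ring_1 \<Rightarrow> 'a) \<Rightarrow> bool" where
  "involution s \<longleftrightarrow> (\<forall>a. s (s a) = a) \<and> (\<forall>a b. s (a + b) = s a + s b)
     \<and> (\<forall>a b. s (a * b) = s b * s a)"

definition is_MP_inverse :: "('a::ring_1 \<Rightarrow> 'a) \<Rightarrow> 'a \<Rightarrow> 'a \<Rightarrow> bool" where
  "is_MP_inverse s a b \<longleftrightarrow> a * b * a = a \<and> b * a * b = b \<and> s (a * b) = a * b \<and> s (b * a) = b * a"

definition MP_invertible :: "('a::ring_1 \<Rightarrow> 'a) \<Rightarrow> 'a \<Rightarrow> bool" where
  "MP_invertible s a \<longleftrightarrow> (\<exists>b. is_MP_inverse s a b)"

definition MP_inv :: "('a::ring_1 \<Rightarrow> 'a) \<Rightarrow> 'a \<Rightarrow> 'a" where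
  "MP_inv s a = (THE b. is_MP_inverse s a b)"

definition projection :: "('a::ring_1 \<Rightarrow> 'a) \<Rightarrow> 'a \<Rightarrow> bool" where
  "projection s p \<longleftrightarrow> p * p = p \<and> s p = p"

end

theory Submission
  imports Defs
begin

lemma inv_simps:
  assumes "involution s"
  shows "s (s x) = x" "s (x * y) = s y * s x" "s (x + y) = s x + s y"
    "s (x - y) = s x - s y" "s 0 = 0" "s (-x) = - s x" "s 1 = 1"
proof -
  show a: "s (s x) = x" "s (x * y) = s y * s x" "s (x + y) = s x + s y"
    using assms unfolding involution_def by auto
  have add: "\<And>u v. s (u + v) = s u + s v" using assms unfolding involution_def by auto
  have ss: "\<And>u. s (s u) = u" using assms unfolding involution_def by auto
  have mul: "\<And>u v. s (u * v) = s v * s u" using assms unfolding involution_def by auto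
  show z: "s 0 = 0" using add[of 0 0] by simp
  have n: "s (-u) = - s u" for u
  proof -
    have "s u + s (-u) = 0" using add[of u "-u"] z by simp
    then show ?thesis by (rule minus_unique[symmetric])
  qed
  show "s (-x) = - s x" by (rule n)
  have "s (x - y) = s (x + - y)" by simp
  also have "... = s x - s y" using add[of x "-y"] n[of y] by simp
  finally show "s (x - y) = s x - s y" .
  have "s (s 1 * 1) = s 1 * s (s 1)" by (rule mul)
  then show "s 1 = 1" using ss by simp
qed

lemma mp_unique:
  assumes inv: "involution s" and b: "is_MP_inverse s a b" and c: "is_MP_inverse s a c"
  shows "b = c"
proof -
  note S = inv_simps[OF inv]
  have b1: "a*b*a = a" "b*a*b = b" "s (a*b) = a*b" "s (b*a) = b*a" using b by (auto simp: is_MP_inverse_def)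
  have c1: "a*c*a = a" "c*a*c = c" "s (a*c) = a*c" "s (c*a) = c*a" using c by (auto simp: is_MP_inverse_def)
  have bb: "b = b * s b * s a" using b1(2,3) S(2)[of a b] by (metis mult.assoc)
  have sa: "s a = s a * s c * s a" using c1(1) S(2) by (metis mult.assoc)
  have "b = b * s b * s a * s c * s a" using bb sa by (metis mult.assoc)
  also have "... = b * s c * s a" using bb by (metis mult.assoc)
  also have "... = b * a * c" using c1(3) S(2)[of a c] by (metis mult.assoc)
  finally have 1: "b = b*a*c" .
  have cc: "c = s a * s c * c" using c1(2,4) S(2)[of c a] by (metis mult.assoc)
  have sa2: "s a = s a * s b * s a" using b1(1) S(2) by (metis mult.assoc)
  have "c = s a * s b * s a * s c * c" using cc sa2 by (metis mult.assoc)
  also have "... = s a * s b * c" using cc by (metis mult.assoc)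
  also have "... = b * a * c" using b1(4) S(2)[of b a] by (metis mult.assoc)
  finally show ?thesis using 1 by simp
qed

lemma MP_inv_eq:
  assumes "involution s" "is_MP_inverse s a b"
  shows "MP_inv s a = b"
  unfolding MP_inv_def using assms mp_unique by blast

lemma aastar:
  assumes inv: "involution s" and A: "is_MP_inverse s a A"
  shows "is_MP_inverse s (a * s a) (s A * A)"
proof -
  note S = inv_simps[OF inv]
  have a1: "a*A*a = a" "A*a*A = A" "s (a*A) = a*A" "s (A*a) = A*a" using A by (auto simp: is_MP_inverse_def)
  have e1: "s A * s a = a * A" using a1(3) S(2) by metis
  have e2: "s a * s A = A * a" using a1(4) S(2) by metis
  have t1: "a * s a * (s A * A) = a * A"
  proof -
    have "a * s a * (s A * A) = a * (s a * s A) * A" by (simp add: mult.assoc)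
    also have "... = a * A" using e2 a1(2) by (simp add: mult.assoc)
    finally show ?thesis .
  qed
  have t2: "s A * A * (a * s a) = a * A"
  proof -
    have "s A * A * (a * s a) = s A * (A * a) * s a" by (simp add: mult.assoc)
    also have "... = s A * (s a * s A) * s a" by (simp only: e2)
    also have "... = (s A * s a) * (s A * s a)" by (simp add: mult.assoc)
    also have "... = a*A*a*A" using e1 by (simp add: mult.assoc)
    also have "... = a*A" using a1(1) by simp
    finally show ?thesis .
  qed
  show ?thesis unfolding is_MP_inverse_def
  proof (intro conjI)
    have "a * s a * (s A * A) * (a * s a) = a * A * (a * s a)" by (simp only: t1)
    also have "... = (a * A * a) * s a" by (simp only: mult.assoc)
    finally have "a * s a * (s A * A) * (a * s a) = a * A * a * s a" .
    then show "a * s a * (s A * A) * (a * s a) = a * s a" using a1(1) by simp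
    have "s A * A * (a * s a) * (s A * A) = s A * A * (a * s a * (s A * A))" by (simp only: mult.assoc)
    also have "... = s A * A * (a * A)" by (simp only: t1)
    also have "... = s A * (A * a * A)" by (simp only: mult.assoc)
    finally show "s A * A * (a * s a) * (s A * A) = s A * A" by (simp only: a1(2))
    show "s (a * s a * (s A * A)) = a * s a * (s A * A)" by (simp only: t1 a1(3))
    show "s (s A * A * (a * s a)) = s A * A * (a * s a)" by (simp only: t2 a1(3))
  qed
qed

lemma rassoc0: "(x::'a::ring_1) * y = 0 \<Longrightarrow> x * (y * z) = 0"
  by (simp add: mult.assoc[symmetric])

theorem lemma2p3:
  fixes s :: "'a::ring_1 \<Rightarrow> 'a" and p q :: 'a
  assumes "involution s"
    and "projection s p" and "projection s q"
    and "MP_invertible s (p * (1 - q))"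
    and "MP_invertible s ((1 - p) * q)"
  shows "MP_invertible s (p - q)
    \<and> MP_inv s (p - q) = (1 - q) * MP_inv s (p * (1 - q) * p) - q * MP_inv s ((1 - p) * q * (1 - p))"
proof -
  note S = inv_simps[OF assms(1)]
  have pp: "p * p = p" "s p = p" using assms(2) by (auto simp: projection_def)
  have qq: "q * q = q" "s q = q" using assms(3) by (auto simp: projection_def)
  define a where "a = p * (1 - q)"
  define b where "b = (1 - p) * q"
  obtain A where A: "is_MP_inverse s a A" using assms(4) a_def by (auto simp: MP_invertible_def)
  obtain B where B: "is_MP_inverse s b B" using assms(5) b_def by (auto simp: MP_invertible_def)
  have a1: "a*A*a = a" "A*a*A = A" "s (a*A) = a*A" "s (A*a) = A*a" using A by (auto simp: is_MP_inverse_def)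
  have b1: "b*B*b = b" "B*b*B = B" "s (b*B) = b*B" "s (B*b) = B*b" using B by (auto simp: is_MP_inverse_def)
  have sa: "s a = (1 - q) * p" unfolding a_def using S pp qq by simp
  have sb: "s b = q * (1 - p)" unfolding b_def using S pp qq by simp
  have z1: "(1 - p) * p = 0" "p * (1 - p) = 0" "(1 - q) * q = 0" "q * (1 - q) = 0"
    using pp qq by (simp_all add: algebra_simps)
  have i1: "(1 - q) * (1 - q) = 1 - q" "(1 - p) * (1 - p) = 1 - p"
    using pp qq by (simp_all add: algebra_simps)
  have "a * s a = p * ((1 - q) * (1 - q)) * p" unfolding sa unfolding a_def by (simp only: mult.assoc)
  then have aa: "p * (1 - q) * p = a * s a" by (simp only: i1)
  have "b * s b = (1 - p) * (q * q) * (1 - p)" unfolding sb unfolding b_def by (simp only: mult.assoc)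
  then have bb: "(1 - p) * q * (1 - p) = b * s b" by (simp only: qq)
  have Aform1: "A = s a * s A * A"
  proof -
    have "A = A * a * A" using a1(2) by simp
    also have "A * a = s a * s A" using a1(4) S(2)[of A a] by simp
    finally show ?thesis .
  qed
  have Aform2: "A = A * s A * s a"
  proof -
    have "A = A * (a * A)" using a1(2) by (simp add: mult.assoc)
    also have "a * A = s A * s a" using a1(3) S(2)[of a A] by simp
    finally show ?thesis by (simp add: mult.assoc)
  qed
  have sAform: "s A = a * A * s A"
  proof -
    have "s A = s (A * a * A)" using a1(2) by simp
    also have "... = s A * s a * s A" using S(2) by (simp add: mult.assoc)
    also have "s A * s a = a * A" using a1(3) S(2)[of a A] by simp
    finally show ?thesis .
  qed
  have Bform1: "B = s b * s B * B"
  proof -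
    have "B = B * b * B" using b1(2) by simp
    also have "B * b = s b * s B" using b1(4) S(2)[of B b] by simp
    finally show ?thesis .
  qed
  have Bform2: "B = B * s B * s b"
  proof -
    have "B = B * (b * B)" using b1(2) by (simp add: mult.assoc)
    also have "b * B = s B * s b" using b1(3) S(2)[of b B] by simp
    finally show ?thesis by (simp add: mult.assoc)
  qed
  have sBform: "s B = b * B * s B"
  proof -
    have "s B = s (B * b * B)" using b1(2) by simp
    also have "... = s B * s b * s B" using S(2) by (simp add: mult.assoc)
    also have "s B * s b = b * B" using b1(3) S(2)[of b B] by simp
    finally show ?thesis .
  qed
  have pA: "(1 - p) * s A = 0"
  proof -
    have "(1 - p) * s A = (1 - p) * (a * A * s A)" by (rule arg_cong[where f="\<lambda>x. (1 - p) * x", OF sAform])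
    also have "... = ((1 - p) * p) * ((1 - q) * A * s A)" unfolding a_def by (simp only: mult.assoc)
    finally have "(1 - p) * s A = ((1 - p) * p) * ((1 - q) * A * s A)" .
    then show ?thesis using z1 by simp
  qed
  have pB: "p * s B = 0"
  proof -
    have "p * s B = p * (b * B * s B)" by (rule arg_cong[where f="\<lambda>x. p * x", OF sBform])
    also have "... = (p * (1 - p)) * (q * B * s B)" unfolding b_def by (simp only: mult.assoc)
    finally have "p * s B = (p * (1 - p)) * (q * B * s B)" .
    then show ?thesis using z1 by simp
  qed
  have TA: "(1 - q) * (s A * A) = A"
  proof -
    have "A = s a * s A * A" by (rule Aform1)
    also have "... = (1 - q) * (p * (s A * A))" unfolding sa by (simp only: mult.assoc)
    also have "p * (s A * A) = s A * A - ((1 - p) * s A) * A" by (simp add: algebra_simps)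
    finally show ?thesis using pA by simp
  qed
  have TB: "q * (s B * B) = B"
  proof -
    have "B = s b * s B * B" by (rule Bform1)
    also have "... = q * ((1 - p) * (s B * B))" unfolding sb by (simp only: mult.assoc)
    also have "(1 - p) * (s B * B) = s B * B - (p * s B) * B" by (simp add: algebra_simps)
    finally show ?thesis using pB by simp
  qed
  have o1: "s a * b = 0" unfolding sa b_def
    by (simp add: mult.assoc rassoc0[OF z1(2)])
  have o2: "b * s a = 0" unfolding sa b_def
    by (simp add: mult.assoc rassoc0[OF z1(4)])
  have o3: "s b * a = 0" unfolding sb a_def
    by (simp add: mult.assoc rassoc0[OF z1(1)])
  have o4: "a * s b = 0" unfolding sb a_def
    by (simp add: mult.assoc rassoc0[OF z1(3)])
  have Ab: "A * b = 0"
  proof -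
    have "A * b = (A * s A * s a) * b" by (rule arg_cong[where f="\<lambda>x. x * b", OF Aform2])
    also have "... = A * s A * (s a * b)" by (simp only: mult.assoc)
    finally have "A * b = A * s A * (s a * b)" .
    then show ?thesis using o1 by simp
  qed
  have bA: "b * A = 0"
  proof -
    have "b * A = b * (s a * s A * A)" by (rule arg_cong[where f="\<lambda>x. b * x", OF Aform1])
    also have "... = (b * s a) * (s A * A)" by (simp only: mult.assoc)
    finally have "b * A = (b * s a) * (s A * A)" .
    then show ?thesis using o2 by simp
  qed
  have Ba: "B * a = 0"
  proof -
    have "B * a = (B * s B * s b) * a" by (rule arg_cong[where f="\<lambda>x. x * a", OF Bform2])
    also have "... = B * s B * (s b * a)" by (simp only: mult.assoc)
    finally have "B * a = B * s B * (s b * a)" .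
    then show ?thesis using o3 by simp
  qed
  have aB: "a * B = 0"
  proof -
    have "a * B = a * (s b * s B * B)" by (rule arg_cong[where f="\<lambda>x. a * x", OF Bform1])
    also have "... = (a * s b) * (s B * B)" by (simp only: mult.assoc)
    finally have "a * B = (a * s b) * (s B * B)" .
    then show ?thesis using o4 by simp
  qed
  have pq: "p - q = a - b" unfolding a_def b_def by (simp add: algebra_simps)
  have Z: "A * (b * z) = 0" "b * (A * z) = 0" "B * (a * z) = 0" "a * (B * z) = 0" for z
    using Ab bA Ba aB by (simp_all add: rassoc0)
  have R: "a * (A * (a * z)) = a * z" "A * (a * (A * z)) = A * z"
          "b * (B * (b * z)) = b * z" "B * (b * (B * z)) = B * z" for z
    using a1 b1 by (simp_all add: mult.assoc[symmetric])
  have a1': "a * (A * a) = a" "A * (a * A) = A" "b * (B * b) = b" "B * (b * B) = B"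
    using a1 b1 by (simp_all add: mult.assoc)
  have mp: "is_MP_inverse s (a - b) (A - B)"
    unfolding is_MP_inverse_def
  proof (intro conjI)
    show "(a - b) * (A - B) * (a - b) = a - b"
      by (simp add: algebra_simps Z R a1' Ab bA Ba aB)
    show "(A - B) * (a - b) * (A - B) = A - B"
      by (simp add: algebra_simps Z R a1' Ab bA Ba aB)
    have "(a - b) * (A - B) = a * A + b * B"
      by (simp add: algebra_simps Ab bA Ba aB)
    then show "s ((a - b) * (A - B)) = (a - b) * (A - B)"
      using S(3) a1(3) b1(3) by simp
    have "(A - B) * (a - b) = A * a + B * b"
      by (simp add: algebra_simps Ab bA Ba aB)
    then show "s ((A - B) * (a - b)) = (A - B) * (a - b)"
      using S(3) a1(4) b1(4) by simp
  qed
  have m1: "MP_inv s (p * (1 - q) * p) = s A * A"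
    unfolding aa by (rule MP_inv_eq[OF assms(1) aastar[OF assms(1) A]])
  have m2: "MP_inv s ((1 - p) * q * (1 - p)) = s B * B"
    unfolding bb by (rule MP_inv_eq[OF assms(1) aastar[OF assms(1) B]])
  show ?thesis
    unfolding pq m1 m2 TA TB MP_invertible_def
    using mp MP_inv_eq[OF assms(1) mp] by blast
qed

end
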